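(* Let $\kappa$ be an uncountable cardinal and $X$, $Y$ Banach spaces. If $X$ and $Y$ are both $\mathrm{ASQ}_{<\kappa}$, then the projective tensor product $X\widehat{\otimes}_\pi Y$ is $\mathrm{ASQ}_{<\kappa}$. If $X$ and $Y$ are both $\mathrm{SQ}_{<\kappa}$, then $X\widehat{\otimes}_\pi Y$ is $\mathrm{SQ}_{<\kappa}$.
   Context: $X\widehat{\otimes}_\pi Y$ is the completion of $X\otimes Y$ under the norm $\|u\|=\inf\{\sum_i\|x_i\|\|y_i\|: u=\sum_i x_i\otimes y_i\}$. A Banach space $Z$ is $\mathrm{ASQ}_{<\kappa}$ if for every set $A\subset S_Z$ with $|A|<\kappa$ and every $\varepsilon>0$ there exists $y\in S_Z$ with $\|x\pm y\|\le 1+\varepsilon$ for all $x\in A$; $Z$ is $\mathrm{SQ}_{<\kappa}$ if for every such $A$ there exists $y\in S_Z$ with $\|x\pm y\|\le 1$ for all $x\in A$. *)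

theory Defs
  imports "HOL-Analysis.Analysis" "HOL-Library.Equipollence"
begin

definition tsum :: "('a \<Rightarrow> 'b \<Rightarrow> 'z::real_vector) \<Rightarrow> ('a \<times> 'b) list \<Rightarrow> 'z" where
  "tsum t ps = sum_list (map (\<lambda>(x, y). t x y) ps)"

text \<open>t : X x Y -> Z exhibits the Banach space Z as the projective tensor product
  of X and Y, i.e. as the completion of the algebraic tensor product X (x) Y under the
  projective norm:
  (1) t is bilinear (t x y plays the role of x (x) y);
  (2) the induced linear map from the algebraic tensor product is injective
      (a finite sum of elementary tensors vanishing in Z vanishes in X (x) Y, i.e.
      is annihilated by every bilinear form);
  (3) on finite sums the norm of Z is the projective norm
      inf of the sums of norm x_i * norm y_i over all representations;
  (4) the algebraic tensor product is dense in Z.\<close>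
definition is_proj_tensor ::
  "('a::real_normed_vector \<Rightarrow> 'b::real_normed_vector \<Rightarrow> 'z::banach) \<Rightarrow> bool" where
  "is_proj_tensor t \<longleftrightarrow>
     bilinear t \<and>
     (\<forall>ps. tsum t ps = 0 \<longrightarrow>
        (\<forall>B :: 'a \<Rightarrow> 'b \<Rightarrow> real. bilinear B \<longrightarrow> tsum B ps = 0)) \<and>
     (\<forall>ps. norm (tsum t ps) =
        Inf {sum_list (map (\<lambda>(x, y). norm x * norm y) qs) | qs. tsum t qs = tsum t ps}) \<and>
     closure (span (range (\<lambda>(x, y). t x y))) = UNIV"

text \<open>A cardinal kappa is represented by a set K of cardinality kappa;
  |A| < kappa is A \<prec> K.\<close>
definition ASQ_lt :: "'k set \<Rightarrow> 'z::real_normed_vector itself \<Rightarrow> bool" where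
  "ASQ_lt K _ \<longleftrightarrow>
     (\<forall>A :: 'z set. A \<subseteq> sphere 0 1 \<longrightarrow> A \<prec> K \<longrightarrow>
        (\<forall>\<epsilon>>0. \<exists>y\<in>sphere 0 1. \<forall>x\<in>A. norm (x + y) \<le> 1 + \<epsilon> \<and> norm (x - y) \<le> 1 + \<epsilon>))"

definition SQ_lt :: "'k set \<Rightarrow> 'z::real_normed_vector itself \<Rightarrow> bool" where
  "SQ_lt K _ \<longleftrightarrow>
     (\<forall>A :: 'z set. A \<subseteq> sphere 0 1 \<longrightarrow> A \<prec> K \<longrightarrow>
        (\<exists>y\<in>sphere 0 1. \<forall>x\<in>A. norm (x + y) \<le> 1 \<and> norm (x - y) \<le> 1))"

end

theory Submission
  imports Defs
begin


lemma countable_lepoll_nat: "countable A \<Longrightarrow> A \<lesssim> (UNIV::nat set)"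
  by (auto simp: countable_def lepoll_def)

lemma small_times_nat:
  fixes K :: "'k set" and A :: "'z set"
  assumes K: "uncountable K" and A: "A \<prec> K"
  shows "A \<times> (UNIV :: (nat \<times> nat) set) \<prec> K"
proof (cases "finite A")
  case True
  have c: "countable (A \<times> (UNIV :: (nat \<times> nat) set))"
    using True by (simp add: countable_finite)
  have "infinite K" using K countable_finite by blast
  then have "(UNIV::nat set) \<lesssim> K" by (simp add: infinite_le_lepoll)
  moreover have "A \<times> (UNIV :: (nat \<times> nat) set) \<lesssim> (UNIV::nat set)"
    using c countable_lepoll_nat by blast
  ultimately have "A \<times> (UNIV :: (nat \<times> nat) set) \<lesssim> K" using lepoll_trans by blast
  moreover have "\<not> K \<approx> A \<times> (UNIV :: (nat \<times> nat) set)"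
    using c K countable_eqpoll by blast
  ultimately show ?thesis unfolding lesspoll_def using eqpoll_sym by blast
next
  case False
  have "(UNIV::(nat\<times>nat) set) \<lesssim> (UNIV::nat set)"
    by (rule countable_lepoll_nat) simp
  moreover have "(UNIV::nat set) \<lesssim> A" using False by (simp add: infinite_le_lepoll)
  ultimately have "(UNIV::(nat\<times>nat) set) \<lesssim> A" using lepoll_trans by blast
  then have "ordLeq2 (card_of (UNIV::(nat\<times>nat) set)) (card_of A)" by (simp add: lepoll_def card_of_ordLeq[symmetric])
  then have "ordIso2 (card_of (A \<times> (UNIV::(nat\<times>nat) set))) (card_of A)"
    using card_of_Times_infinite[OF False] by blast
  then have "A \<times> (UNIV::(nat\<times>nat) set) \<approx> A" by (simp add: eqpoll_iff_card_of_ordIso)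
  then show ?thesis using A eq_lesspoll_trans by blast
qed



lemma functional_step:
  fixes f :: "'a::real_normed_vector \<Rightarrow> real" and W :: "'a set"
  assumes W: "subspace W" and lf: "linear f" and fb: "\<forall>u\<in>W. \<bar>f u\<bar> \<le> norm u"
  shows "\<exists>c. \<forall>w\<in>W. \<forall>a. f w + a * c \<le> norm (w + a *\<^sub>R v)"
proof -
  define S where "S = {f w' - norm (w' - v) | w'. w' \<in> W}"
  have key: "f w' - norm (w' - v) \<le> norm (w + v) - f w" if "w \<in> W" "w' \<in> W" for w w'
  proof -
    have "w + w' \<in> W" using W that by (simp add: subspace_add)
    then have "f w + f w' \<le> norm (w + w')" using fb linear_add[OF lf] by fastforce
    also have "norm (w + w') \<le> norm (w + v) + norm (w' - v)"
      using norm_triangle_ineq[of "w + v" "w' - v"] by (simp add: algebra_simps)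
    finally show ?thesis by simp
  qed
  have "0 \<in> W" using W subspace_0 by blast
  then have ne: "S \<noteq> {}" unfolding S_def by blast
  have bdd: "bdd_above S" unfolding S_def bdd_above_def using key[OF \<open>0 \<in> W\<close>] by blast
  define c where "c = Sup S"
  have up: "f w' - norm (w' - v) \<le> c" if "w' \<in> W" for w'
    unfolding c_def by (rule cSup_upper[OF _ bdd]) (use that S_def in blast)
  have lo: "c \<le> norm (w + v) - f w" if "w \<in> W" for w
    unfolding c_def by (rule cSup_least[OF ne]) (use that key S_def in blast)
  have "f w + a * c \<le> norm (w + a *\<^sub>R v)" if w: "w \<in> W" for w a
  proof (cases a "0::real" rule: linorder_cases)
    case less
    define b where "b = - a"
    have b: "b > 0" using less b_def by simp
    have wb: "(1/b) *\<^sub>R w \<in> W" using W w by (simp add: subspace_scale)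
    have fs: "f ((1/b) *\<^sub>R w) = (1/b) * f w" by (simp add: linear_scale[OF lf])
    have "b * ((1/b) * f w - c) = f w - b * c" using b by (simp add: field_simps)
    then have "f w + a * c = b * (f ((1/b) *\<^sub>R w) - c)"
      using fs by (simp add: b_def)
    also have "\<dots> \<le> b * norm ((1/b) *\<^sub>R w - v)"
      using up[OF wb] b by (intro mult_left_mono) auto
    also have "\<dots> = norm (b *\<^sub>R ((1/b) *\<^sub>R w - v))" using b by simp
    also have "b *\<^sub>R ((1/b) *\<^sub>R w - v) = w + a *\<^sub>R v"
      using b by (simp add: b_def algebra_simps)
    finally show ?thesis .
  next
    case equal
    then show ?thesis using fb w by force
  next
    case greater
    have wb: "(1/a) *\<^sub>R w \<in> W" using W w by (simp add: subspace_scale)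
    have fs: "f ((1/a) *\<^sub>R w) = (1/a) * f w" by (simp add: linear_scale[OF lf])
    have "a * ((1/a) * f w + c) = f w + a * c" using greater by (simp add: field_simps)
    then have "f w + a * c = a * (f ((1/a) *\<^sub>R w) + c)"
      using fs by simp
    also have "\<dots> \<le> a * norm ((1/a) *\<^sub>R w + v)"
      using lo[OF wb] greater by (intro mult_left_mono) auto
    also have "\<dots> = norm (a *\<^sub>R ((1/a) *\<^sub>R w + v))" using greater by simp
    also have "a *\<^sub>R ((1/a) *\<^sub>R w + v) = w + a *\<^sub>R v"
      using greater by (simp add: algebra_simps)
    finally show ?thesis .
  qed
  then show ?thesis by blast
qed

lemma exists_functional:
  fixes x :: "'a::real_normed_vector"
  assumes "finite S"
  shows "\<exists>f. linear f \<and> f x = norm x \<and> (\<forall>v\<in>span (insert x S). \<bar>f v\<bar> \<le> norm v)"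
  using assms
proof (induction S rule: finite_induct)
  case empty
  show ?case
  proof (cases "x = 0")
    case True
    then show ?thesis by (intro exI[of _ "\<lambda>_. 0"]) (auto simp: linear_zero)
  next
    case False
    then have "independent {x}" by (simp add: independent_insert)
    then obtain g :: "'a \<Rightarrow> real" where g: "linear g" "g x = norm x"
      using linear_independent_extend[of "{x}" "\<lambda>_. norm x"] by auto
    have "\<bar>g v\<bar> \<le> norm v" if "v \<in> span (insert x {})" for v
    proof -
      from that obtain k where "v = k *\<^sub>R x" by (auto simp: span_singleton)
      then show ?thesis using g by (simp add: linear_scale abs_mult)
    qed
    then show ?thesis using g by blast
  qed
next
  case (insert v S)
  from insert.IH obtain f where f: "linear f" "f x = norm x"
    "\<forall>u\<in>span (insert x S). \<bar>f u\<bar> \<le> norm u" by blast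
  define W where "W = span (insert x S)"
  have sW: "subspace W" unfolding W_def by simp
  show ?case
  proof (cases "v \<in> W")
    case True
    have eq: "span (insert x (insert v S)) = W"
      using True unfolding W_def by (simp add: insert_commute[of x v] span_redundant)
    show ?thesis using f(1,2) f(3)[folded W_def, folded eq] by blast
  next
    case False
    obtain B where B: "B \<subseteq> W" "independent B" "W \<subseteq> span B" "card B = dim W"
      by (rule basis_exists)
    have "span B \<subseteq> W" using B sW by (simp add: span_minimal)
    then have "v \<notin> span B" using False by blast
    then have "independent (insert v B)" using B independent_insertI by blast
    then obtain g :: "'a \<Rightarrow> real" where g: "linear g" "\<forall>u\<in>insert v B. g u = (if u = v then 1 else 0)"
      using linear_independent_extend[of "insert v B" "\<lambda>u. if u = v then 1 else (0::real)"] by blast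
    have gv: "g v = 1" using g by simp
    have gB: "\<forall>u\<in>B. g u = 0" using g False B by auto
    have gW: "g u = 0" if "u \<in> W" for u
    proof -
      have "u \<in> span B" using that B by blast
      then show ?thesis using linear_eq_0_on_span[OF g(1), of B u] gB by blast
    qed
    have fb: "\<forall>u\<in>W. \<bar>f u\<bar> \<le> norm u" using f(3) unfolding W_def .
    obtain c where c: "\<forall>w\<in>W. \<forall>a. f w + a * c \<le> norm (w + a *\<^sub>R v)"
      using functional_step[OF sW f(1) fb, of v] by blast
    define h where "h u = f u + (c - f v) * g u" for u
    have lh: "linear h"
    proof (rule linearI)
      fix p q :: 'a show "h (p + q) = h p + h q"
        unfolding h_def linear_add[OF f(1)] linear_add[OF g(1)] by (simp add: algebra_simps)
    next
      fix r :: real and p :: 'a show "h (r *\<^sub>R p) = r *\<^sub>R h p"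
        unfolding h_def linear_scale[OF f(1)] linear_scale[OF g(1)] by (simp add: algebra_simps)
    qed
    have "x \<in> W" unfolding W_def by (simp add: span_base)
    then have hx: "h x = norm x" unfolding h_def using gW f(2) by simp
    have "\<bar>h u\<bar> \<le> norm u" if u: "u \<in> span (insert x (insert v S))" for u
    proof -
      have "insert x (insert v S) \<subseteq> insert v W" unfolding W_def using span_base by blast
      then have "span (insert x (insert v S)) \<subseteq> span (insert v W)" by (rule span_mono)
      then have "u \<in> span (insert v W)" using u by blast
      then obtain a where a: "u - a *\<^sub>R v \<in> span W" unfolding span_insert by blast
      define w where "w = u - a *\<^sub>R v"
      have spW: "span W = W" using sW by simp
      have w: "w \<in> W" using a spW unfolding w_def by simp
      have uw: "u = w + a *\<^sub>R v" unfolding w_def by simp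
      have e1: "h u = f w + a * f v + (c - f v) * (g w + a * g v)"
        unfolding h_def uw linear_add[OF f(1)] linear_scale[OF f(1)] linear_add[OF g(1)] linear_scale[OF g(1)]
        by simp
      have hu: "h u = f w + a * c"
        unfolding e1 gW[OF w] gv by (simp add: algebra_simps)
      have mw: "- w \<in> W" using w sW by (simp add: subspace_neg)
      have hmu: "- h u = f (- w) + (- a) * c" unfolding hu linear_neg[OF f(1)] by simp
      have "f (- w) + (- a) * c \<le> norm (- w + (- a) *\<^sub>R v)" using c mw by blast
      also have "- w + (- a) *\<^sub>R v = - u" unfolding uw by simp
      finally have "- h u \<le> norm u" unfolding hmu by simp
      moreover have "f w + a * c \<le> norm (w + a *\<^sub>R v)" using c w by blast
      then have "h u \<le> norm u" using hu uw by simp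
      ultimately show ?thesis by linarith
    qed
    then show ?thesis using lh hx by blast
  qed
qed



definition wt :: "('a::real_normed_vector \<times> 'b::real_normed_vector) list \<Rightarrow> real" where
  "wt qs = sum_list (map (\<lambda>(x, y). norm x * norm y) qs)"

lemma tsum_Nil[simp]: "tsum t [] = 0" by (simp add: tsum_def)
lemma tsum_Cons[simp]: "tsum t ((x, y) # qs) = t x y + tsum t qs" by (simp add: tsum_def)
lemma tsum_append[simp]: "tsum t (ps @ qs) = tsum t ps + tsum t qs" by (simp add: tsum_def)
lemma wt_Nil[simp]: "wt [] = 0" by (simp add: wt_def)
lemma wt_Cons[simp]: "wt ((x, y) # qs) = norm x * norm y + wt qs" by (simp add: wt_def)
lemma wt_nonneg: "0 \<le> wt qs"
  unfolding wt_def by (induction qs) auto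

lemma pt_bilinear: "is_proj_tensor t \<Longrightarrow> bilinear t"
  by (simp add: is_proj_tensor_def)

lemma pt_norm: "is_proj_tensor t \<Longrightarrow> norm (tsum t ps) = Inf {wt qs | qs. tsum t qs = tsum t ps}"
  by (simp add: is_proj_tensor_def wt_def)

lemma pt_norm_le_wt:
  assumes "is_proj_tensor t" "tsum t qs = tsum t ps"
  shows "norm (tsum t ps) \<le> wt qs"
proof -
  have bdd: "bdd_below {wt qs | qs. tsum t qs = tsum t ps}"
    unfolding bdd_below_def using wt_nonneg by blast
  have mem: "wt qs \<in> {wt qs | qs. tsum t qs = tsum t ps}" using assms(2) by blast
  show ?thesis unfolding pt_norm[OF assms(1)] by (rule cInf_lower[OF mem bdd])
qed

lemma pt_norm_tsum_le: "is_proj_tensor t \<Longrightarrow> norm (tsum t qs) \<le> wt qs"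
  using pt_norm_le_wt by blast

lemma pt_norm_t_le:
  assumes "is_proj_tensor t" shows "norm (t x y) \<le> norm x * norm y"
  using pt_norm_tsum_le[OF assms, of "[(x, y)]"] by simp

lemma pt_norm_t_ge:
  fixes t :: "'a::real_normed_vector \<Rightarrow> 'b::real_normed_vector \<Rightarrow> 'z::banach"
  assumes pt: "is_proj_tensor t" and q: "tsum t qs = t x y"
  shows "norm x * norm y \<le> wt qs"
proof -
  have bt: "bilinear t" using pt by (rule pt_bilinear)
  obtain f :: "'a \<Rightarrow> real" where f: "linear f" "f x = norm x"
    "\<forall>v\<in>span (insert x (fst ` set qs)). \<bar>f v\<bar> \<le> norm v"
    using exists_functional[of "fst ` set qs" x] by blast
  obtain g :: "'b \<Rightarrow> real" where g: "linear g" "g y = norm y"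
    "\<forall>v\<in>span (insert y (snd ` set qs)). \<bar>g v\<bar> \<le> norm v"
    using exists_functional[of "snd ` set qs" y] by blast
  define B where "B u v = f u * g v" for u v
  have bB: "bilinear B"
    unfolding bilinear_def
  proof (intro conjI allI)
    fix u show "linear (\<lambda>v. B u v)"
      by (rule linearI) (simp_all add: B_def linear_add[OF g(1)] linear_scale[OF g(1)] algebra_simps)
  next
    fix v show "linear (\<lambda>u. B u v)"
      by (rule linearI) (simp_all add: B_def linear_add[OF f(1)] linear_scale[OF f(1)] algebra_simps)
  qed
  have "tsum t (qs @ [(-x, y)]) = 0" using q bilinear_lneg[OF bt] by simp
  then have "tsum B (qs @ [(-x, y)]) = 0"
    using pt bB unfolding is_proj_tensor_def by blast
  then have e: "tsum B qs = B x y" using bilinear_lneg[OF bB] by simp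
  have "tsum B qs \<le> wt qs"
  proof -
    have "tsum B qs = sum_list (map (\<lambda>(p, q). f p * g q) qs)"
      unfolding tsum_def B_def by simp
    also have "\<dots> \<le> sum_list (map (\<lambda>(p, q). norm p * norm q) qs)"
    proof (rule sum_list_mono)
      fix pq assume pq: "pq \<in> set qs"
      obtain p q where pqe: "pq = (p, q)" by (cases pq)
      have "p \<in> span (insert x (fst ` set qs))" using pq pqe
        by (intro span_base) force
      then have fp: "\<bar>f p\<bar> \<le> norm p" using f(3) by blast
      have "q \<in> span (insert y (snd ` set qs))" using pq pqe
        by (intro span_base) force
      then have gq: "\<bar>g q\<bar> \<le> norm q" using g(3) by blast
      have "f p * g q \<le> \<bar>f p\<bar> * \<bar>g q\<bar>" by (metis abs_ge_self abs_mult)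
      also have "\<dots> \<le> norm p * norm q" using fp gq by (intro mult_mono) auto
      finally show "(\<lambda>(p, q). f p * g q) pq \<le> (\<lambda>(p, q). norm p * norm q) pq"
        using pqe by simp
    qed
    finally show ?thesis unfolding wt_def .
  qed
  then show ?thesis using e f(2) g(2) by (simp add: B_def)
qed

lemma pt_norm_t:
  fixes t :: "'a::real_normed_vector \<Rightarrow> 'b::real_normed_vector \<Rightarrow> 'z::banach"
  assumes pt: "is_proj_tensor t"
  shows "norm (t x y) = norm x * norm y"
proof (rule antisym)
  show "norm (t x y) \<le> norm x * norm y" by (rule pt_norm_t_le[OF pt])
  have "norm (tsum t [(x, y)]) = Inf {wt qs | qs. tsum t qs = tsum t [(x, y)]}"
    by (rule pt_norm[OF pt])
  also have "\<dots> \<ge> norm x * norm y"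
    by (rule cInf_greatest) (use pt_norm_t_ge[OF pt] in \<open>auto intro!: exI[of _ "[(x,y)]"]\<close>)
  finally show "norm x * norm y \<le> norm (t x y)" by simp
qed



lemma tsum_scale:
  assumes "bilinear t"
  shows "c *\<^sub>R tsum t qs = tsum t (map (\<lambda>(x, y). (c *\<^sub>R x, y)) qs)"
  by (induction qs) (auto simp: bilinear_lmul[OF assms] scaleR_add_right)

lemma span_range_tsum:
  assumes bt: "bilinear t"
  shows "span (range (\<lambda>(x, y). t x y)) \<subseteq> range (tsum t)"
proof (rule span_minimal)
  show "range (\<lambda>(x, y). t x y) \<subseteq> range (tsum t)"
  proof
    fix v assume "v \<in> range (\<lambda>(x, y). t x y)"
    then obtain x y where "v = t x y" by auto
    then have "v = tsum t [(x, y)]" by simp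
    then show "v \<in> range (tsum t)" by blast
  qed
  show "subspace (range (tsum t))"
    unfolding subspace_def
  proof (intro conjI ballI allI)
    show "0 \<in> range (tsum t)" using tsum_Nil[of t, symmetric] by blast
  next
    fix u v assume "u \<in> range (tsum t)" "v \<in> range (tsum t)"
    then obtain p q where "u = tsum t p" "v = tsum t q" by auto
    then have "u + v = tsum t (p @ q)" by simp
    then show "u + v \<in> range (tsum t)" by blast
  next
    fix c :: real and u assume "u \<in> range (tsum t)"
    then obtain p where "u = tsum t p" by auto
    then have "c *\<^sub>R u = tsum t (map (\<lambda>(x, y). (c *\<^sub>R x, y)) p)" using tsum_scale[OF bt] by simp
    then show "c *\<^sub>R u \<in> range (tsum t)" by blast
  qed
qed

lemma approx_rep:
  fixes t :: "'a::real_normed_vector \<Rightarrow> 'b::real_normed_vector \<Rightarrow> 'z::banach"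
  assumes pt: "is_proj_tensor t" and e: "e > 0"
  shows "\<exists>qs. norm (z - tsum t qs) < e \<and> wt qs < norm (tsum t qs) + e"
proof -
  have bt: "bilinear t" using pt by (rule pt_bilinear)
  have "z \<in> closure (span (range (\<lambda>(x, y). t x y)))" using pt unfolding is_proj_tensor_def by blast
  then obtain v where v: "v \<in> span (range (\<lambda>(x, y). t x y))" "dist v z < e"
    using e unfolding closure_approachable by blast
  then obtain ps where ps: "v = tsum t ps" using span_range_tsum[OF bt] by blast
  define X where "X = {wt qs | qs. tsum t qs = tsum t ps}"
  have ne: "X \<noteq> {}" unfolding X_def by blast
  have "Inf X < norm (tsum t ps) + e" using pt_norm[OF pt, of ps] e unfolding X_def by simp
  then obtain r where "r \<in> X" "r < norm (tsum t ps) + e" using cInf_lessD[OF ne] by blast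
  then obtain qs where qs: "tsum t qs = tsum t ps" "wt qs < norm (tsum t ps) + e"
    unfolding X_def by blast
  have "norm (z - tsum t qs) < e" using v ps qs(1) by (simp add: dist_norm norm_minus_commute)
  then show ?thesis using qs by (metis)
qed

lemma pair_est:
  assumes bt: "bilinear t" and nb: "\<And>p q. norm (t p q) \<le> norm p * norm q"
    and a1: "norm (a + x0) \<le> c" and a2: "norm (a - x0) \<le> c"
    and b1: "norm (b + y0) \<le> c" and b2: "norm (b - y0) \<le> c"
  shows "norm (t a b + t x0 y0) \<le> c * c \<and> norm (t a b - t x0 y0) \<le> c * c"
proof
  have "t (a + x0) (b + y0) + t (a - x0) (b - y0) = 2 *\<^sub>R (t a b + t x0 y0)"
    by (simp add: bilinear_ladd[OF bt] bilinear_radd[OF bt] bilinear_lsub[OF bt]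
        bilinear_rsub[OF bt] scaleR_2 algebra_simps)
  then have "2 * norm (t a b + t x0 y0) = norm (t (a + x0) (b + y0) + t (a - x0) (b - y0))"
    by simp
  also have "\<dots> \<le> norm (t (a + x0) (b + y0)) + norm (t (a - x0) (b - y0))"
    by (rule norm_triangle_ineq)
  also have "\<dots> \<le> norm (a + x0) * norm (b + y0) + norm (a - x0) * norm (b - y0)"
    using nb by (intro add_mono) auto
  also have "\<dots> \<le> c * c + c * c"
    using a1 a2 b1 b2 order_trans[OF norm_ge_zero a1] by (intro add_mono mult_mono) auto
  finally show "norm (t a b + t x0 y0) \<le> c * c" by simp
next
  have "t (a + x0) (b - y0) + t (a - x0) (b + y0) = 2 *\<^sub>R (t a b - t x0 y0)"
    by (simp add: bilinear_ladd[OF bt] bilinear_radd[OF bt] bilinear_lsub[OF bt]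
        bilinear_rsub[OF bt] scaleR_2 algebra_simps)
  then have "2 * norm (t a b - t x0 y0) = norm (t (a + x0) (b - y0) + t (a - x0) (b + y0))"
    by simp
  also have "\<dots> \<le> norm (t (a + x0) (b - y0)) + norm (t (a - x0) (b + y0))"
    by (rule norm_triangle_ineq)
  also have "\<dots> \<le> norm (a + x0) * norm (b - y0) + norm (a - x0) * norm (b + y0)"
    using nb by (intro add_mono) auto
  also have "\<dots> \<le> c * c + c * c"
    using a1 a2 b1 b2 order_trans[OF norm_ge_zero a1] by (intro add_mono mult_mono) auto
  finally show "norm (t a b - t x0 y0) \<le> c * c" by simp
qed

lemma single_est:
  assumes bt: "bilinear t" and nb: "\<And>p q. norm (t p q) \<le> norm p * norm q"
    and hp: "p \<noteq> 0 \<Longrightarrow> q \<noteq> 0 \<Longrightarrow> norm (sgn p + x0) \<le> c \<and> norm (sgn p - x0) \<le> c \<and>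
              norm (sgn q + y0) \<le> c \<and> norm (sgn q - y0) \<le> c"
  shows "norm (t p q + (norm p * norm q) *\<^sub>R t x0 y0) \<le> norm p * norm q * (c * c) \<and>
         norm (t p q - (norm p * norm q) *\<^sub>R t x0 y0) \<le> norm p * norm q * (c * c)"
proof (cases "p = 0 \<or> q = 0")
  case True
  then show ?thesis using bilinear_lzero[OF bt] bilinear_rzero[OF bt] by auto
next
  case False
  then have p: "p \<noteq> 0" and q: "q \<noteq> 0" by auto
  have tp: "t p q = (norm p * norm q) *\<^sub>R t (sgn p) (sgn q)"
  proof -
    have "norm p *\<^sub>R sgn p = p" using p by (simp add: sgn_div_norm)
    moreover have "norm q *\<^sub>R sgn q = q" using q by (simp add: sgn_div_norm)
    ultimately have "t p q = t (norm p *\<^sub>R sgn p) (norm q *\<^sub>R sgn q)" by simp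
    also have "\<dots> = (norm p * norm q) *\<^sub>R t (sgn p) (sgn q)"
      by (simp add: bilinear_lmul[OF bt] bilinear_rmul[OF bt])
    finally show ?thesis .
  qed
  have est: "norm (t (sgn p) (sgn q) + t x0 y0) \<le> c * c \<and> norm (t (sgn p) (sgn q) - t x0 y0) \<le> c * c"
    using hp[OF p q] by (intro pair_est[OF bt nb]) auto
  have "t p q + (norm p * norm q) *\<^sub>R t x0 y0 = (norm p * norm q) *\<^sub>R (t (sgn p) (sgn q) + t x0 y0)"
    unfolding tp by (simp add: scaleR_add_right)
  moreover have "t p q - (norm p * norm q) *\<^sub>R t x0 y0 = (norm p * norm q) *\<^sub>R (t (sgn p) (sgn q) - t x0 y0)"
    unfolding tp by (simp add: scaleR_diff_right)
  ultimately show ?thesis using est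
    by (simp add: mult_left_mono)
qed

lemma list_est:
  assumes bt: "bilinear t" and nb: "\<And>p q. norm (t p q) \<le> norm p * norm q"
    and hp: "\<And>p q. (p, q) \<in> set qs \<Longrightarrow> p \<noteq> 0 \<Longrightarrow> q \<noteq> 0 \<Longrightarrow>
              norm (sgn p + x0) \<le> c \<and> norm (sgn p - x0) \<le> c \<and>
              norm (sgn q + y0) \<le> c \<and> norm (sgn q - y0) \<le> c"
  shows "norm (tsum t qs + wt qs *\<^sub>R t x0 y0) \<le> wt qs * (c * c) \<and>
         norm (tsum t qs - wt qs *\<^sub>R t x0 y0) \<le> wt qs * (c * c)"
  using hp
proof (induction qs)
  case Nil
  then show ?case by simp
next
  case (Cons pq qs)
  obtain p q where pq: "pq = (p, q)" by (cases pq)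
  have IH: "norm (tsum t qs + wt qs *\<^sub>R t x0 y0) \<le> wt qs * (c * c) \<and>
         norm (tsum t qs - wt qs *\<^sub>R t x0 y0) \<le> wt qs * (c * c)"
    using Cons.IH Cons.prems by auto
  have S: "norm (t p q + (norm p * norm q) *\<^sub>R t x0 y0) \<le> norm p * norm q * (c * c) \<and>
         norm (t p q - (norm p * norm q) *\<^sub>R t x0 y0) \<le> norm p * norm q * (c * c)"
    by (rule single_est[OF bt nb]) (use Cons.prems pq in auto)
  define u where "u = tsum t qs"
  define s where "s = wt qs"
  define w where "w = t x0 y0"
  define l where "l = norm p * norm q"
  have e1: "tsum t (pq # qs) + wt (pq # qs) *\<^sub>R t x0 y0 = (t p q + l *\<^sub>R w) + (u + s *\<^sub>R w)"
    by (simp add: pq u_def s_def w_def l_def algebra_simps)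
  have e2: "tsum t (pq # qs) - wt (pq # qs) *\<^sub>R t x0 y0 = (t p q - l *\<^sub>R w) + (u - s *\<^sub>R w)"
    by (simp add: pq u_def s_def w_def l_def algebra_simps)
  have w: "wt (pq # qs) * (c * c) = l * (c * c) + s * (c * c)"
    by (simp add: pq s_def l_def algebra_simps)
  show ?case unfolding e1 e2 w
    using norm_triangle_le[of "t p q + l *\<^sub>R w" "u + s *\<^sub>R w"]
      norm_triangle_le[of "t p q - l *\<^sub>R w" "u - s *\<^sub>R w"] S IH
    unfolding u_def s_def w_def l_def
    by (smt (verit) norm_triangle_ineq)
qed

lemma limit_le:
  fixes a b d :: real
  assumes "\<And>k::nat. a \<le> b + d / (real k + 1)"
  shows "a \<le> b"
proof (rule ccontr)
  assume "\<not> a \<le> b"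
  then have ab: "a - b > 0" by simp
  have d: "d \<ge> 0" using assms[of 0] ab by simp
  obtain n :: nat where n: "inverse (real (Suc n)) < (a - b) / (d + 1)"
    using reals_Archimedean[of "(a - b) / (d + 1)"] ab d by auto
  have "d / (real n + 1) \<le> (d + 1) / (real n + 1)" using d by (simp add: divide_right_mono)
  also have "\<dots> = (d + 1) * inverse (real (Suc n))" by (simp add: field_simps)
  also have "\<dots> < (d + 1) * ((a - b) / (d + 1))" using n d by (intro mult_strict_left_mono) auto
  also have "\<dots> = a - b" using d by simp
  finally show False using assms[of n] by simp
qed



lemma main_est:
  fixes K :: "'k set" and t :: "'a::banach \<Rightarrow> 'b::banach \<Rightarrow> 'z::banach" and c :: real
    and A :: "'z set"
  assumes K: "uncountable K" and pt: "is_proj_tensor t"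
    and As: "A \<subseteq> sphere 0 1" and AK: "A \<prec> K"
    and HX: "\<And>B::'a set. B \<subseteq> sphere 0 1 \<Longrightarrow> B \<prec> K \<Longrightarrow>
               \<exists>x0\<in>sphere 0 1. \<forall>a\<in>B. norm (a + x0) \<le> c \<and> norm (a - x0) \<le> c"
    and HY: "\<And>B::'b set. B \<subseteq> sphere 0 1 \<Longrightarrow> B \<prec> K \<Longrightarrow>
               \<exists>y0\<in>sphere 0 1. \<forall>b\<in>B. norm (b + y0) \<le> c \<and> norm (b - y0) \<le> c"
  shows "\<exists>w\<in>sphere 0 1. \<forall>z\<in>A. norm (z + w) \<le> c * c \<and> norm (z - w) \<le> c * c"
proof -
  have bt: "bilinear t" using pt by (rule pt_bilinear)
  define P where "P z k qs \<longleftrightarrow> norm (z - tsum t qs) < 1 / (real k + 1) \<and>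
          wt qs < norm (tsum t qs) + 1 / (real k + 1)" for z :: 'z and k :: nat and qs
  have ex: "\<exists>qs. P z k qs" for z k
    unfolding P_def by (rule approx_rep[OF pt]) simp
  define R where "R z k = (SOME qs. P z k qs)" for z k
  have R': "P z k (R z k)" for z k unfolding R_def by (rule someI_ex[OF ex])
  have R: "norm (z - tsum t (R z k)) < 1 / (real k + 1) \<and>
          wt (R z k) < norm (tsum t (R z k)) + 1 / (real k + 1)" for z k
    using R'[of z k] unfolding P_def .
  define AX where "AX = (\<lambda>(z, k, i). sgn (fst (R z k ! i))) ` (A \<times> UNIV) \<inter> sphere (0::'a) 1"
  define AY where "AY = (\<lambda>(z, k, i). sgn (snd (R z k ! i))) ` (A \<times> UNIV) \<inter> sphere (0::'b) 1"
  have small: "A \<times> (UNIV :: (nat \<times> nat) set) \<prec> K" by (rule small_times_nat[OF K AK])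
  have "AX \<subseteq> (\<lambda>(z, k, i). sgn (fst (R z k ! i))) ` (A \<times> (UNIV :: (nat \<times> nat) set))"
    unfolding AX_def by (rule Int_lower1)
  then have "AX \<lesssim> A \<times> (UNIV :: (nat \<times> nat) set)" unfolding lepoll_iff
    by (rule exI[of _ "\<lambda>(z, k, i). sgn (fst (R z k ! i))"])
  then have AXK: "AX \<prec> K" using small lesspoll_trans1 by blast
  have "AY \<subseteq> (\<lambda>(z, k, i). sgn (snd (R z k ! i))) ` (A \<times> (UNIV :: (nat \<times> nat) set))"
    unfolding AY_def by (rule Int_lower1)
  then have "AY \<lesssim> A \<times> (UNIV :: (nat \<times> nat) set)" unfolding lepoll_iff
    by (rule exI[of _ "\<lambda>(z, k, i). sgn (snd (R z k ! i))"])
  then have AYK: "AY \<prec> K" using small lesspoll_trans1 by blast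
  have AXs: "AX \<subseteq> sphere 0 1" unfolding AX_def by (rule Int_lower2)
  have AYs: "AY \<subseteq> sphere 0 1" unfolding AY_def by (rule Int_lower2)
  obtain x0 where x0: "x0 \<in> sphere 0 1" "\<forall>a\<in>AX. norm (a + x0) \<le> c \<and> norm (a - x0) \<le> c"
    using HX[OF AXs AXK] by blast
  obtain y0 where y0: "y0 \<in> sphere 0 1" "\<forall>b\<in>AY. norm (b + y0) \<le> c \<and> norm (b - y0) \<le> c"
    using HY[OF AYs AYK] by blast
  define w where "w = t x0 y0"
  have nw: "norm w = 1" unfolding w_def pt_norm_t[OF pt] using x0(1) y0(1) by simp
  have memX: "sgn p \<in> AX" if h: "z \<in> A" "(p, q) \<in> set (R z k)" "p \<noteq> 0" for z k p q
  proof -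
    obtain i where i: "i < length (R z k)" "R z k ! i = (p, q)"
      using h(2) by (metis in_set_conv_nth)
    have "sgn p = (\<lambda>(z, k, i). sgn (fst (R z k ! i))) (z, k, i)" using i by simp
    moreover have "(z, k, i) \<in> A \<times> UNIV" using h(1) by simp
    moreover have "sgn p \<in> sphere (0::'a) 1" using h(3) by (simp add: norm_sgn)
    ultimately show ?thesis unfolding AX_def by blast
  qed
  have memY: "sgn q \<in> AY" if h: "z \<in> A" "(p, q) \<in> set (R z k)" "q \<noteq> 0" for z k p q
  proof -
    obtain i where i: "i < length (R z k)" "R z k ! i = (p, q)"
      using h(2) by (metis in_set_conv_nth)
    have "sgn q = (\<lambda>(z, k, i). sgn (snd (R z k ! i))) (z, k, i)" using i by simp
    moreover have "(z, k, i) \<in> A \<times> UNIV" using h(1) by simp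
    moreover have "sgn q \<in> sphere (0::'b) 1" using h(3) by (simp add: norm_sgn)
    ultimately show ?thesis unfolding AY_def by blast
  qed
  have "norm (z + w) \<le> c * c \<and> norm (z - w) \<le> c * c" if z: "z \<in> A" for z
  proof -
    have bnd: "norm (z + w) \<le> c * c + (3 + 2 * (c * c)) / (real k + 1) \<and>
               norm (z - w) \<le> c * c + (3 + 2 * (c * c)) / (real k + 1)" for k
    proof -
      define u where "u = tsum t (R z k)"
      define s where "s = wt (R z k)"
      define e where "e = 1 / (real k + 1)"
      have e0: "e > 0" unfolding e_def by simp
      have Ru: "norm (z - u) < e" "s < norm u + e" using R[of z k] unfolding u_def s_def e_def by auto
      have su: "norm u \<le> s" unfolding u_def s_def by (rule pt_norm_tsum_le[OF pt])
      have nz: "norm z = 1" using z As by auto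
      have "norm z \<le> norm (z - u) + norm u" using norm_triangle_ineq[of "z - u" u] by simp
      then have u1: "1 - e < norm u" using Ru nz by simp
      have "norm u \<le> norm (u - z) + norm z" using norm_triangle_ineq[of "u - z" z] by simp
      then have "norm u \<le> norm (z - u) + norm z" by (simp add: norm_minus_commute)
      then have u2: "norm u < 1 + e" using Ru nz by simp
      have LE: "norm (u + s *\<^sub>R w) \<le> s * (c * c) \<and> norm (u - s *\<^sub>R w) \<le> s * (c * c)"
        unfolding u_def s_def w_def
      proof (rule list_est[OF bt])
        show "norm (t p q) \<le> norm p * norm q" for p q by (rule pt_norm_t_le[OF pt])
      next
        fix p q assume pq: "(p, q) \<in> set (R z k)" "p \<noteq> 0" "q \<noteq> 0"
        show "norm (sgn p + x0) \<le> c \<and> norm (sgn p - x0) \<le> c \<and>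
              norm (sgn q + y0) \<le> c \<and> norm (sgn q - y0) \<le> c"
          using x0(2) y0(2) memX[OF z pq(1,2)] memY[OF z pq(1,3)] by blast
      qed
      have cc: "0 \<le> c * c" by simp
      have scc: "s * (c * c) \<le> (1 + 2 * e) * (c * c)"
        using Ru u2 cc by (intro mult_right_mono) auto
      have p1: "z + w = (z - u) + (u + s *\<^sub>R w) + (1 - s) *\<^sub>R w" by (simp add: algebra_simps)
      have p2: "z - w = (z - u) + (u - s *\<^sub>R w) + (s - 1) *\<^sub>R w" by (simp add: algebra_simps)
      have t1: "norm (z + w) \<le> norm (z - u) + norm (u + s *\<^sub>R w) + \<bar>1 - s\<bar>"
        unfolding p1 using norm_triangle_ineq[of "(z - u) + (u + s *\<^sub>R w)" "(1 - s) *\<^sub>R w"]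
          norm_triangle_ineq[of "z - u" "u + s *\<^sub>R w"] nw by simp
      have t2: "norm (z - w) \<le> norm (z - u) + norm (u - s *\<^sub>R w) + \<bar>s - 1\<bar>"
        unfolding p2 using norm_triangle_ineq[of "(z - u) + (u - s *\<^sub>R w)" "(s - 1) *\<^sub>R w"]
          norm_triangle_ineq[of "z - u" "u - s *\<^sub>R w"] nw by simp
      have fin: "c * c + (3 + 2 * (c * c)) / (real k + 1) = c * c + 3 * e + 2 * e * (c * c)"
      proof -
        have "(3 + 2 * (c * c)) / (real k + 1) = (3 + 2 * (c * c)) * e" by (simp add: e_def)
        also have "\<dots> = 3 * e + 2 * e * (c * c)" by (simp add: distrib_right)
        finally show ?thesis by simp
      qed
      have a1: "\<bar>1 - s\<bar> \<le> 2 * e" using Ru su u1 u2 by linarith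
      have a2: "\<bar>s - 1\<bar> \<le> 2 * e" using Ru su u1 u2 by linarith
      have sc: "(1 + 2 * e) * (c * c) = c * c + 2 * e * (c * c)" by (simp add: algebra_simps)
      show ?thesis unfolding fin using t1 t2 LE scc Ru(1) a1 a2 sc by linarith
    qed
    show ?thesis
      using limit_le[of "norm (z + w)" "c * c" "3 + 2 * (c * c)"]
        limit_le[of "norm (z - w)" "c * c" "3 + 2 * (c * c)"] bnd by blast
  qed
  moreover have "w \<in> sphere 0 1" using nw by simp
  ultimately show ?thesis by blast
qed


theorem theorem4p4:
  fixes K :: "'k set"
    and t :: "'a::banach \<Rightarrow> 'b::banach \<Rightarrow> 'z::banach"
  assumes "uncountable K"
    and "is_proj_tensor t"
  shows "(ASQ_lt K TYPE('a) \<and> ASQ_lt K TYPE('b) \<longrightarrow> ASQ_lt K TYPE('z)) \<and>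
         (SQ_lt K TYPE('a) \<and> SQ_lt K TYPE('b) \<longrightarrow> SQ_lt K TYPE('z))"
proof (intro conjI impI)
  assume H: "ASQ_lt K TYPE('a) \<and> ASQ_lt K TYPE('b)"
  show "ASQ_lt K TYPE('z)"
    unfolding ASQ_lt_def
  proof (intro allI impI)
    fix A :: "'z set" and \<epsilon> :: real
    assume As: "A \<subseteq> sphere 0 1" and AK: "A \<prec> K" and e: "\<epsilon> > 0"
    define \<delta> where "\<delta> = min (\<epsilon> / 3) 1"
    have d0: "\<delta> > 0" using e by (simp add: \<delta>_def)
    have d1: "\<delta> \<le> 1" and d3: "\<delta> \<le> \<epsilon> / 3" by (simp_all add: \<delta>_def)
    have HX: "\<exists>x0\<in>sphere 0 1. \<forall>a\<in>B. norm (a + x0) \<le> 1 + \<delta> \<and> norm (a - x0) \<le> 1 + \<delta>"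
      if "B \<subseteq> sphere 0 1" "B \<prec> K" for B :: "'a set"
      using H that d0 unfolding ASQ_lt_def by blast
    have HY: "\<exists>y0\<in>sphere 0 1. \<forall>b\<in>B. norm (b + y0) \<le> 1 + \<delta> \<and> norm (b - y0) \<le> 1 + \<delta>"
      if "B \<subseteq> sphere 0 1" "B \<prec> K" for B :: "'b set"
      using H that d0 unfolding ASQ_lt_def by blast
    obtain w :: 'z where w: "w \<in> sphere 0 1"
      "\<forall>z\<in>A. norm (z + w) \<le> (1 + \<delta>) * (1 + \<delta>) \<and> norm (z - w) \<le> (1 + \<delta>) * (1 + \<delta>)"
      using main_est[OF assms As AK HX HY] by blast
    have "(1 + \<delta>) * (1 + \<delta>) = 1 + 2 * \<delta> + \<delta> * \<delta>" by (simp add: algebra_simps)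
    moreover have "\<delta> * \<delta> \<le> \<delta>" using d0 d1 by (simp add: mult_left_le)
    ultimately have "(1 + \<delta>) * (1 + \<delta>) \<le> 1 + \<epsilon>" using d3 by linarith
    then show "\<exists>y\<in>sphere 0 1. \<forall>x\<in>A. norm (x + y) \<le> 1 + \<epsilon> \<and> norm (x - y) \<le> 1 + \<epsilon>"
      using w by force
  qed
next
  assume H: "SQ_lt K TYPE('a) \<and> SQ_lt K TYPE('b)"
  show "SQ_lt K TYPE('z)"
    unfolding SQ_lt_def
  proof (intro allI impI)
    fix A :: "'z set"
    assume As: "A \<subseteq> sphere 0 1" and AK: "A \<prec> K"
    have HX: "\<exists>x0\<in>sphere 0 1. \<forall>a\<in>B. norm (a + x0) \<le> 1 \<and> norm (a - x0) \<le> 1"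
      if "B \<subseteq> sphere 0 1" "B \<prec> K" for B :: "'a set"
      using H that unfolding SQ_lt_def by blast
    have HY: "\<exists>y0\<in>sphere 0 1. \<forall>b\<in>B. norm (b + y0) \<le> 1 \<and> norm (b - y0) \<le> 1"
      if "B \<subseteq> sphere 0 1" "B \<prec> K" for B :: "'b set"
      using H that unfolding SQ_lt_def by blast
    show "\<exists>y\<in>sphere 0 1. \<forall>x\<in>A. norm (x + y) \<le> 1 \<and> norm (x - y) \<le> 1"
      using main_est[OF assms As AK HX HY] by simp
  qed
qed

end
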